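(* Let $R,S$ be outer univalent multirelations $X\leftrightarrow\mathcal{P}Y$. Then $R\sqsubseteq_\uparrow S\iff R\Cup S=S$ and $R\sqsubseteq_\downarrow S\iff R\Cap S=R$.
   Context: $R\Cup S=\{(a,A\cup B)\mid (a,A)\in R,(a,B)\in S\}$, $R\Cap S=\{(a,A\cap B)\mid (a,A)\in R,(a,B)\in S\}$. $R^{\uparrow}=\{(a,A)\mid\exists B.(a,B)\in R\wedge B\subseteq A\}$, $R^{\downarrow}=\{(a,A)\mid\exists B.(a,B)\in R\wedge A\subseteq B\}$; $R\sqsubseteq_\uparrow S\iff S\subseteq R^{\uparrow}$; $R\sqsubseteq_\downarrow S\iff R\subseteq S^{\downarrow}$. $R$ is outer univalent if for each $a\in X$ there is at most one $B$ with $(a,B)\in R$. *)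

theory Defs
  imports Main
begin

definition inner_union :: "('a \<times> 'b set) set \<Rightarrow> ('a \<times> 'b set) set \<Rightarrow> ('a \<times> 'b set) set" where
  "inner_union R S = {(a, A \<union> B) | a A B. (a, A) \<in> R \<and> (a, B) \<in> S}"

definition inner_inter :: "('a \<times> 'b set) set \<Rightarrow> ('a \<times> 'b set) set \<Rightarrow> ('a \<times> 'b set) set" where
  "inner_inter R S = {(a, A \<inter> B) | a A B. (a, A) \<in> R \<and> (a, B) \<in> S}"

definition up_closure :: "('a \<times> 'b set) set \<Rightarrow> ('a \<times> 'b set) set" where
  "up_closure R = {(a, A). \<exists>B. (a, B) \<in> R \<and> B \<subseteq> A}"

definition down_closure :: "('a \<times> 'b set) set \<Rightarrow> ('a \<times> 'b set) set" where
  "down_closure R = {(a, A). \<exists>B. (a, B) \<in> R \<and> A \<subseteq> B}"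

definition up_le :: "('a \<times> 'b set) set \<Rightarrow> ('a \<times> 'b set) set \<Rightarrow> bool" where
  "up_le R S \<longleftrightarrow> S \<subseteq> up_closure R"

definition down_le :: "('a \<times> 'b set) set \<Rightarrow> ('a \<times> 'b set) set \<Rightarrow> bool" where
  "down_le R S \<longleftrightarrow> R \<subseteq> down_closure S"

definition outer_univalent :: "('a \<times> 'b set) set \<Rightarrow> bool" where
  "outer_univalent R \<longleftrightarrow> (\<forall>a B C. (a, B) \<in> R \<longrightarrow> (a, C) \<in> R \<longrightarrow> B = C)"

end

theory Submission
  imports Defs
begin

theorem lemma5p9:
  fixes R S :: "('a \<times> 'b set) set"
  assumes "outer_univalent R" and "outer_univalent S"
  shows "(up_le R S \<longleftrightarrow> inner_union R S = S) \<and> (down_le R S \<longleftrightarrow> inner_inter R S = R)"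
proof -
  have uR: "\<And>a B C. (a, B) \<in> R \<Longrightarrow> (a, C) \<in> R \<Longrightarrow> B = C"
    using assms(1) unfolding outer_univalent_def by blast
  have uS: "\<And>a B C. (a, B) \<in> S \<Longrightarrow> (a, C) \<in> S \<Longrightarrow> B = C"
    using assms(2) unfolding outer_univalent_def by blast
  have 1: "up_le R S \<longleftrightarrow> inner_union R S = S"
  proof
    assume h: "up_le R S"
    show "inner_union R S = S"
    proof
      show "inner_union R S \<subseteq> S"
      proof
        fix p assume "p \<in> inner_union R S"
        then obtain a A B where p: "p = (a, A \<union> B)" "(a, A) \<in> R" "(a, B) \<in> S"
          unfolding inner_union_def by blast
        from h p(3) obtain C where "(a, C) \<in> R" "C \<subseteq> B"
          unfolding up_le_def up_closure_def by blast
        with uR p(2) have "A \<subseteq> B" by blast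
        with p show "p \<in> S" by (simp add: Un_absorb1)
      qed
      show "S \<subseteq> inner_union R S"
      proof
        fix p assume ps: "p \<in> S"
        obtain a B where pB: "p = (a, B)" by (cases p)
        from h ps pB obtain C where "(a, C) \<in> R" "C \<subseteq> B"
          unfolding up_le_def up_closure_def by blast
        then show "p \<in> inner_union R S" using ps pB
          unfolding inner_union_def by (metis (mono_tags, lifting) CollectI Un_absorb1)
      qed
    qed
  next
    assume h: "inner_union R S = S"
    show "up_le R S" unfolding up_le_def
    proof
      fix p assume ps: "p \<in> S"
      obtain a B where pB: "p = (a, B)" by (cases p)
      with ps h have "(a, B) \<in> inner_union R S" by simp
      then obtain A B' where "B = A \<union> B'" "(a, A) \<in> R" "(a, B') \<in> S"
        unfolding inner_union_def by blast
      then show "p \<in> up_closure R" using pB unfolding up_closure_def by blast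
    qed
  qed
  have 2: "down_le R S \<longleftrightarrow> inner_inter R S = R"
  proof
    assume h: "down_le R S"
    show "inner_inter R S = R"
    proof
      show "inner_inter R S \<subseteq> R"
      proof
        fix p assume "p \<in> inner_inter R S"
        then obtain a A B where p: "p = (a, A \<inter> B)" "(a, A) \<in> R" "(a, B) \<in> S"
          unfolding inner_inter_def by blast
        from h p(2) obtain C where "(a, C) \<in> S" "A \<subseteq> C"
          unfolding down_le_def down_closure_def by blast
        with uS p(3) have "A \<subseteq> B" by blast
        with p show "p \<in> R" by (simp add: Int_absorb2)
      qed
      show "R \<subseteq> inner_inter R S"
      proof
        fix p assume ps: "p \<in> R"
        obtain a A where pA: "p = (a, A)" by (cases p)
        from h ps pA obtain C where "(a, C) \<in> S" "A \<subseteq> C"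
          unfolding down_le_def down_closure_def by blast
        then show "p \<in> inner_inter R S" using ps pA
          unfolding inner_inter_def by (metis (mono_tags, lifting) CollectI Int_absorb2)
      qed
    qed
  next
    assume h: "inner_inter R S = R"
    show "down_le R S" unfolding down_le_def
    proof
      fix p assume ps: "p \<in> R"
      obtain a A where pA: "p = (a, A)" by (cases p)
      with ps h have "(a, A) \<in> inner_inter R S" by simp
      then obtain A' B where "A = A' \<inter> B" "(a, A') \<in> R" "(a, B) \<in> S"
        unfolding inner_inter_def by blast
      then show "p \<in> down_closure S" using pA unfolding down_closure_def by blast
    qed
  qed
  from 1 2 show ?thesis by blast
qed

end
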